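(* Let $N=(P,T,F,I,O)$ be a pWF net with a place $p^*$ and a transition $t^*$ such that $p^*\bullet=\{t^*\}$, $\bullet t^*=\{p^*\}$, $p^*\notin I\cup O$, and $F\cap(\bullet p^*\times t^*\bullet)=\emptyset$. Let $M$ be the net with input set $I$ and output set $O$ obtained from $N$ by removing $p^*$, $t^*$ and all edges incident to them, and adding all edges in $\bullet p^*\times t^*\bullet$ (preset and postset taken in $N$). Then $M$ is a pWF net, and if $N$ is sub-sound then $M$ is sub-sound.
   Context: Petri nets and markings. A Petri net is a triple $(P,T,F)$ with $P$ a finite set of places, $T$ a finite set of transitions, $P\cap T=\emptyset$, and $F\subseteq (P\times T)\cup(T\times P)$. For a node $x$, $\bullet x=\{y\mid (y,x)\in F\}$, $x\bullet=\{y\mid (x,y)\in F\}$. A marking is a multiset over $P$ (a function $P\to\mathbb N$); sets of places are identified with bags of multiplicity one, $+,-,\le$ are pointwise, and $k.m$ is the sum of $k$ copies of $m$. Transition $t$ is enabled at $m$ iff $\bullet t\le m$, firing gives $m-\bullet t+t\bullet$, and $m\xrightarrow{*}m'$ denotes reachability by a finite (possibly empty) firing sequence. A pWF net is $(P,T,F,I,O)$ with $(P,T,F)$ a Petri net, $I,O\subseteq P$ non-empty (input/output places), every node reachable by a directed path from some node of $I$, and some node of $O$ reachable from every node; input places may have incoming edges and output places outgoing edges. Sub-soundness. A pWF net is sub-sound if for all integers $k\ge k'\ge 0$ and every marking $m'$: if $k.I\xrightarrow{*}m'+k'.O$ then $m'\xrightarrow{*}(k-k').O$. *)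

theory Defs
  imports Main
begin

(* Nodes (places and transitions) share one type 'a; a net is given by
   P (places), T (transitions), F (flow relation).  Markings are functions
   'a => nat (multisets over places). *)

definition preset :: "('a \<times> 'a) set \<Rightarrow> 'a \<Rightarrow> 'a set" where
  "preset F x = {y. (y, x) \<in> F}"

definition postset :: "('a \<times> 'a) set \<Rightarrow> 'a \<Rightarrow> 'a set" where
  "postset F x = {y. (x, y) \<in> F}"

definition petri_net :: "'a set \<Rightarrow> 'a set \<Rightarrow> ('a \<times> 'a) set \<Rightarrow> bool" where
  "petri_net P T F \<longleftrightarrow> finite P \<and> finite T \<and> P \<inter> T = {} \<and> F \<subseteq> (P \<times> T) \<union> (T \<times> P)"

definition pWF :: "'a set \<Rightarrow> 'a set \<Rightarrow> ('a \<times> 'a) set \<Rightarrow> 'a set \<Rightarrow> 'a set \<Rightarrow> bool" where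
  "pWF P T F Inp Out \<longleftrightarrow> petri_net P T F \<and> Inp \<subseteq> P \<and> Out \<subseteq> P \<and> Inp \<noteq> {} \<and> Out \<noteq> {} \<and>
     (\<forall>x \<in> P \<union> T. \<exists>i \<in> Inp. (i, x) \<in> F\<^sup>*) \<and>
     (\<forall>x \<in> P \<union> T. \<exists>q \<in> Out. (x, q) \<in> F\<^sup>*)"

type_synonym 'a marking = "'a \<Rightarrow> nat"

definition bag :: "'a set \<Rightarrow> 'a marking" where
  "bag A = (\<lambda>p. if p \<in> A then 1 else 0)"

definition smult :: "nat \<Rightarrow> 'a marking \<Rightarrow> 'a marking" where
  "smult k m = (\<lambda>p. k * m p)"

definition enabled :: "('a \<times> 'a) set \<Rightarrow> 'a \<Rightarrow> 'a marking \<Rightarrow> bool" where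
  "enabled F t m \<longleftrightarrow> (\<forall>p. bag (preset F t) p \<le> m p)"

definition fire :: "('a \<times> 'a) set \<Rightarrow> 'a \<Rightarrow> 'a marking \<Rightarrow> 'a marking" where
  "fire F t m = (\<lambda>p. m p - bag (preset F t) p + bag (postset F t) p)"

definition step :: "'a set \<Rightarrow> ('a \<times> 'a) set \<Rightarrow> 'a marking \<Rightarrow> 'a marking \<Rightarrow> bool" where
  "step T F m m' \<longleftrightarrow> (\<exists>t \<in> T. enabled F t m \<and> m' = fire F t m)"

definition reach :: "'a set \<Rightarrow> ('a \<times> 'a) set \<Rightarrow> 'a marking \<Rightarrow> 'a marking \<Rightarrow> bool" where
  "reach T F = (step T F)\<^sup>*\<^sup>*"

definition sub_sound :: "'a set \<Rightarrow> 'a set \<Rightarrow> ('a \<times> 'a) set \<Rightarrow> 'a set \<Rightarrow> 'a set \<Rightarrow> bool" where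
  "sub_sound P T F Inp Out \<longleftrightarrow> pWF P T F Inp Out \<and>
     (\<forall>k k' (m' :: 'a marking). k' \<le> k \<longrightarrow>
        reach T F (smult k (bag Inp)) (\<lambda>p. m' p + smult k' (bag Out) p) \<longrightarrow>
        reach T F m' (smult (k - k') (bag Out)))"

end

theory Submission
  imports Defs
begin

theorem mainTheorem12:
  fixes P T Inp Out :: "'a set" and F :: "('a \<times> 'a) set" and ps ts :: 'a
  assumes N: "pWF P T F Inp Out"
    and ps: "ps \<in> P" and ts: "ts \<in> T"
    and post_ps: "postset F ps = {ts}"
    and pre_ts: "preset F ts = {ps}"
    and notIO: "ps \<notin> Inp \<union> Out"
    and disj: "F \<inter> (preset F ps \<times> postset F ts) = {}"
  defines "PM \<equiv> P - {ps}"
    and "TM \<equiv> T - {ts}"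
    and "FM \<equiv> {(x, y) \<in> F. x \<notin> {ps, ts} \<and> y \<notin> {ps, ts}} \<union> (preset F ps \<times> postset F ts)"
  shows "pWF PM TM FM Inp Out \<and> (sub_sound P T F Inp Out \<longrightarrow> sub_sound PM TM FM Inp Out)"
proof -
  have PN: "petri_net P T F" and IP: "Inp \<subseteq> P" and OP: "Out \<subseteq> P" and Ine: "Inp \<noteq> {}"
    and One: "Out \<noteq> {}"
    and reachI: "\<forall>x\<in>P\<union>T. \<exists>i\<in>Inp. (i,x)\<in>F\<^sup>*" and reachO: "\<forall>x\<in>P\<union>T. \<exists>q\<in>Out. (x,q)\<in>F\<^sup>*"
    using N unfolding pWF_def by auto
  have fin: "finite P" "finite T" and disjPT: "P \<inter> T = {}" and FPT: "F \<subseteq> P\<times>T \<union> T\<times>P"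
    using PN unfolding petri_net_def by auto
  have psts: "ps \<noteq> ts" using ps ts disjPT by auto
  define A where "A = preset F ps"
  define B where "B = postset F ts"
  have FA: "(x,y)\<in>F \<Longrightarrow> (x\<in>P \<and> y\<in>T) \<or> (x\<in>T \<and> y\<in>P)" for x y using FPT by auto
  have ps_out: "(ps,y)\<in>F \<longleftrightarrow> y = ts" for y using post_ps unfolding postset_def by blast
  have ts_in: "(y,ts)\<in>F \<longleftrightarrow> y = ps" for y using pre_ts unfolding preset_def by blast
  have inA: "y \<in> A \<longleftrightarrow> (y,ps)\<in>F" for y unfolding A_def preset_def by simp
  have inB: "y \<in> B \<longleftrightarrow> (ts,y)\<in>F" for y unfolding B_def postset_def by simp
  have AB: "x \<in> A \<Longrightarrow> y \<in> B \<Longrightarrow> (x,y) \<notin> F" for x y using disj unfolding A_def B_def by blast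
  have tsA: "ts \<notin> A" using AB inA inB by blast
  have psB: "ps \<notin> B" using AB inA inB by blast
  have AT: "A \<subseteq> T" using inA FA ps disjPT by blast
  have BP: "B \<subseteq> P" using inB FA ts disjPT by blast
  have psA: "ps \<notin> A" using AT ps disjPT by blast
  have tsB: "ts \<notin> B" using BP ts disjPT by blast
  have FM_iff: "(x,y)\<in>FM \<longleftrightarrow> ((x,y)\<in>F \<and> x\<notin>{ps,ts} \<and> y\<notin>{ps,ts}) \<or> (x\<in>A \<and> y\<in>B)" for x y
    unfolding FM_def A_def B_def by auto

  have fwd: "(i,y)\<in>F\<^sup>* \<Longrightarrow> i\<notin>{ps,ts} \<Longrightarrow>
      (y\<notin>{ps,ts} \<longrightarrow> (i,y)\<in>FM\<^sup>*) \<and> (y\<in>{ps,ts} \<longrightarrow> (\<exists>u\<in>A. (i,u)\<in>FM\<^sup>*))" for i y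
  proof (induction rule: rtrancl_induct)
    case base then show ?case by simp
  next
    case (step y z)
    show ?case
    proof (cases "y \<in> {ps,ts}")
      case False
      with step have iy: "(i,y)\<in>FM\<^sup>*" by blast
      show ?thesis
      proof (cases "z \<in> {ps,ts}")
        case False
        then have "(y,z) \<in> FM" using FM_iff step(2) \<open>y \<notin> {ps,ts}\<close> by blast
        then show ?thesis using iy False by (meson rtrancl.rtrancl_into_rtrancl)
      next
        case True
        then have "z = ps" using ts_in step(2) \<open>y \<notin> {ps,ts}\<close> by auto
        then have "y \<in> A" using inA step(2) by simp
        then show ?thesis using iy \<open>z = ps\<close> psts by blast
      qed
    next
      case True
      then obtain u where u: "u\<in>A" "(i,u)\<in>FM\<^sup>*" using step by blast
      show ?thesis
      proof (cases "y = ps")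
        case True
        then have "z = ts" using ps_out step(2) by simp
        then show ?thesis using u by blast
      next
        case False
        then have "y = ts" using True by simp
        then have zB: "z \<in> B" using inB step(2) by simp
        then have "z \<notin> {ps,ts}" using psB tsB by auto
        moreover have "(u,z) \<in> FM" using FM_iff u zB by blast
        ultimately show ?thesis using u by (meson rtrancl.rtrancl_into_rtrancl)
      qed
    qed
  qed

  have bwd: "(x,q)\<in>F\<^sup>* \<Longrightarrow> q\<notin>{ps,ts} \<Longrightarrow>
      (x\<notin>{ps,ts} \<longrightarrow> (x,q)\<in>FM\<^sup>*) \<and> (x\<in>{ps,ts} \<longrightarrow> (\<exists>v\<in>B. (v,q)\<in>FM\<^sup>*))" for x q
  proof (induction rule: converse_rtrancl_induct)
    case base then show ?case by simp
  next
    case (step x y)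
    show ?case
    proof (cases "x \<in> {ps,ts}")
      case False
      show ?thesis
      proof (cases "y \<in> {ps,ts}")
        case False
        then have "(x,y) \<in> FM" using FM_iff step(1) \<open>x \<notin> {ps,ts}\<close> by blast
        moreover have "(y,q)\<in>FM\<^sup>*" using step False by blast
        ultimately show ?thesis using \<open>x \<notin> {ps,ts}\<close> by (meson converse_rtrancl_into_rtrancl)
      next
        case True
        then have "y = ps" using ts_in step(1) \<open>x \<notin> {ps,ts}\<close> by auto
        then have xA: "x \<in> A" using inA step(1) by simp
        obtain v where v: "v\<in>B" "(v,q)\<in>FM\<^sup>*" using step True by blast
        have "(x,v) \<in> FM" using FM_iff xA v by blast
        then show ?thesis using v \<open>x \<notin> {ps,ts}\<close> by (meson converse_rtrancl_into_rtrancl)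
      qed
    next
      case True
      show ?thesis
      proof (cases "x = ps")
        case True
        then have "y = ts" using ps_out step(1) by simp
        then show ?thesis using step True by blast
      next
        case False
        then have "x = ts" using True by simp
        then have yB: "y \<in> B" using inB step(1) by simp
        then have "y \<notin> {ps,ts}" using psB tsB by auto
        then have "(y,q)\<in>FM\<^sup>*" using step by blast
        then show ?thesis using yB True by blast
      qed
    qed
  qed

  have FMsub: "FM \<subseteq> PM\<times>TM \<union> TM\<times>PM"
  proof
    fix e assume "e \<in> FM"
    then obtain x y where e: "e = (x,y)" and "(x,y)\<in>FM" by (cases e) auto
    then consider "(x,y)\<in>F" "x\<notin>{ps,ts}" "y\<notin>{ps,ts}" | "x\<in>A" "y\<in>B" using FM_iff by blast
    then show "e \<in> PM\<times>TM \<union> TM\<times>PM"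
    proof cases
      case 1 then show ?thesis using FA[of x y] e unfolding PM_def TM_def by auto
    next
      case 2 then show ?thesis using AT BP tsA psB e unfolding PM_def TM_def by auto
    qed
  qed
  have pWFM: "pWF PM TM FM Inp Out"
    unfolding pWF_def petri_net_def
  proof (intro conjI ballI)
    show "finite PM" "finite TM" using fin unfolding PM_def TM_def by auto
    show "PM \<inter> TM = {}" using disjPT unfolding PM_def TM_def by auto
    show "FM \<subseteq> PM\<times>TM \<union> TM\<times>PM" by (rule FMsub)
    show "Inp \<subseteq> PM" "Out \<subseteq> PM" using IP OP notIO unfolding PM_def by auto
    show "Inp \<noteq> {}" "Out \<noteq> {}" by fact+
  next
    fix x assume x: "x \<in> PM \<union> TM"
    then have "x \<in> P \<union> T" "x \<notin> {ps,ts}" unfolding PM_def TM_def using ps ts disjPT by auto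
    then obtain i where i: "i\<in>Inp" "(i,x)\<in>F\<^sup>*" using reachI by blast
    then have "i \<notin> {ps,ts}" using notIO IP ts disjPT by auto
    then show "\<exists>i\<in>Inp. (i,x)\<in>FM\<^sup>*" using fwd[OF i(2)] i(1) \<open>x \<notin> {ps,ts}\<close> by blast
  next
    fix x assume x: "x \<in> PM \<union> TM"
    then have "x \<in> P \<union> T" "x \<notin> {ps,ts}" unfolding PM_def TM_def using ps ts disjPT by auto
    then obtain q where q: "q\<in>Out" "(x,q)\<in>F\<^sup>*" using reachO by blast
    then have "q \<notin> {ps,ts}" using notIO OP ts disjPT by auto
    then show "\<exists>q\<in>Out. (x,q)\<in>FM\<^sup>*" using bwd[OF q(2)] q(1) \<open>x \<notin> {ps,ts}\<close> by blast
  qed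

  have ps_notpre: "t \<noteq> ts \<Longrightarrow> ps \<notin> preset F t" for t using ps_out unfolding preset_def by auto
  have preM: "t\<in>T \<Longrightarrow> t\<noteq>ts \<Longrightarrow> preset FM t = preset F t" for t
  proof -
    assume t: "t\<in>T" "t\<noteq>ts"
    have "t \<notin> B" "t \<noteq> ps" using t BP ps disjPT by auto
    moreover have "(y,t)\<in>F \<Longrightarrow> y \<noteq> ps \<and> y \<noteq> ts" for y
      using ps_out t FA[of y t] disjPT ts by auto
    ultimately show ?thesis unfolding preset_def using FM_iff t by auto
  qed
  have postM: "t\<in>T \<Longrightarrow> t\<noteq>ts \<Longrightarrow> postset FM t = (postset F t - {ps}) \<union> (if t\<in>A then B else {})" for t
  proof -
    assume t: "t\<in>T" "t\<noteq>ts"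
    have "t \<noteq> ps" using t ps disjPT by auto
    moreover have "(t,y)\<in>F \<Longrightarrow> y \<noteq> ts" for y
      using t FA[of t y] disjPT ts by auto
    ultimately show ?thesis unfolding postset_def using FM_iff t AT tsA psB by auto
  qed
  have tA: "t \<in> A \<longleftrightarrow> ps \<in> postset F t" for t using inA unfolding postset_def by simp
  have disjAB: "t\<in>A \<Longrightarrow> postset F t \<inter> B = {}" for t using AB unfolding postset_def by auto

  have stepMN: "reach T F m m2" if st: "step TM FM m m2" for m m2
  proof -
    obtain t where t: "t\<in>T" "t\<noteq>ts" and en: "enabled FM t m" and m2: "m2 = fire FM t m"
      using st unfolding step_def TM_def by auto
    have en': "enabled F t m" using en preM[OF t] unfolding enabled_def by simp
    define m1 where "m1 = fire F t m"
    have s1: "step T F m m1" unfolding step_def m1_def using t en' by blast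
    show ?thesis
    proof (cases "t \<in> A")
      case True
      have en2: "enabled F ts m1" unfolding enabled_def pre_ts m1_def fire_def bag_def
        using True tA ps_notpre[OF t(2)] by auto
      have s2: "step T F m1 (fire F ts m1)" unfolding step_def using ts en2 by blast
      have "fire F ts m1 = m2"
      proof
        fix p
        show "fire F ts m1 p = m2 p"
        proof -
          have f1: "ps \<in> postset F t" using True tA by simp
          have f2: "ps \<notin> preset F t" using ps_notpre[OF t(2)] .
          have f3: "p \<in> postset F t \<Longrightarrow> p \<notin> B" using disjAB[OF True] by blast
          show ?thesis
            unfolding m2 m1_def fire_def pre_ts preM[OF t] postM[OF t] B_def[symmetric]
            using f1 f2 f3 psB True by (cases "p = ps"; cases "p \<in> B"; auto simp add: bag_def)
        qed
      qed
      then show ?thesis using s1 s2 unfolding reach_def by auto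
    next
      case False
      have "m1 = m2"
      proof
        fix p
        show "m1 p = m2 p"
        proof -
          have f1: "ps \<notin> postset F t" using False tA by simp
          show ?thesis
            unfolding m2 m1_def fire_def preM[OF t] postM[OF t]
            using f1 False by (cases "p = ps"; simp add: bag_def)
        qed
      qed
      then show ?thesis using s1 unfolding reach_def by auto
    qed
  qed
  have reachMN: "reach TM FM m m2 \<Longrightarrow> reach T F m m2" for m m2
    unfolding reach_def
  proof (induction rule: rtranclp_induct)
    case base then show ?case by simp
  next
    case (step y z)
    then show ?case using stepMN[of y z] unfolding reach_def by auto
  qed
  have stepM_ps: "step TM FM m m2 \<Longrightarrow> m2 ps = m ps" for m m2
  proof -
    assume "step TM FM m m2"
    then obtain t where t: "t\<in>T" "t\<noteq>ts" and m2: "m2 = fire FM t m"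
      unfolding step_def TM_def by auto
    show ?thesis unfolding m2 fire_def preM[OF t] postM[OF t]
      using ps_notpre[OF t(2)] psB by (auto simp: bag_def)
  qed
  have reachM_ps: "reach TM FM m m2 \<Longrightarrow> m2 ps = m ps" for m m2
    unfolding reach_def
    by (induction rule: rtranclp_induct) (auto dest: stepM_ps)

  define \<alpha> :: "'a marking \<Rightarrow> 'a marking" where
    "\<alpha> = (\<lambda>m p. if p = ps then 0 else m p + m ps * bag B p)"
  have stepNM: "reach TM FM (\<alpha> m) (\<alpha> m2)" if st: "step T F m m2" for m m2
  proof -
    obtain t where t: "t\<in>T" and en: "enabled F t m" and m2: "m2 = fire F t m"
      using st unfolding step_def by auto
    show ?thesis
    proof (cases "t = ts")
      case True
      have "m ps \<ge> 1" using en unfolding enabled_def True pre_ts bag_def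
        by (metis (full_types) singletonI)
      then have "\<alpha> m2 = \<alpha> m"
      proof -
        assume m1: "m ps \<ge> 1"
        show ?thesis
        proof
          fix p
          show "\<alpha> m2 p = \<alpha> m p"
            unfolding m2 True \<alpha>_def fire_def pre_ts B_def[symmetric]
            using psB m1 by (cases "p = ps"; cases "p \<in> B"; simp add: bag_def)
        qed
      qed
      then show ?thesis unfolding reach_def by simp
    next
      case False
      have en': "enabled FM t (\<alpha> m)"
        unfolding enabled_def preM[OF t False]
      proof
        fix p
        show "bag (preset F t) p \<le> \<alpha> m p"
        proof -
          have "bag (preset F t) p \<le> m p" using en unfolding enabled_def by auto
          then show ?thesis using ps_notpre[OF False] unfolding \<alpha>_def
            by (cases "p = ps"; simp add: bag_def)
        qed
      qed
      have "fire FM t (\<alpha> m) = \<alpha> m2"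
      proof
        fix p
        have le: "bag (preset F t) p \<le> m p" using en unfolding enabled_def by auto
        show "fire FM t (\<alpha> m) p = \<alpha> m2 p"
        proof (cases "p = ps")
          case True
          then show ?thesis unfolding m2 \<alpha>_def fire_def preM[OF t False] postM[OF t False]
            using ps_notpre[OF False] psB by (simp add: bag_def)
        next
          case pn: False
          show ?thesis
          proof (cases "t \<in> A")
            case tA1: True
            have f1: "ps \<in> postset F t" using tA1 tA by simp
            have f3: "p \<in> postset F t \<Longrightarrow> p \<notin> B" using disjAB[OF tA1] by blast
            show ?thesis
              unfolding m2 \<alpha>_def fire_def preM[OF t False] postM[OF t False]
              using f1 f3 ps_notpre[OF False] psB pn le tA1
              by (cases "p \<in> B"; cases "p \<in> postset F t"; simp add: bag_def)
          next
            case tA1: False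
            have f1: "ps \<notin> postset F t" using tA1 tA by simp
            show ?thesis
              unfolding m2 \<alpha>_def fire_def preM[OF t False] postM[OF t False]
              using f1 ps_notpre[OF False] psB pn le tA1
              by (cases "p \<in> B"; cases "p \<in> postset F t"; simp add: bag_def)
          qed
        qed
      qed
      then have "step TM FM (\<alpha> m) (\<alpha> m2)"
        unfolding step_def TM_def using t False en' by auto
      then show ?thesis unfolding reach_def by auto
    qed
  qed
  have reachNM: "reach T F m m2 \<Longrightarrow> reach TM FM (\<alpha> m) (\<alpha> m2)" for m m2
    unfolding reach_def
  proof (induction rule: rtranclp_induct)
    case base then show ?case by simp
  next
    case (step y z)
    then show ?case using stepNM[of y z] unfolding reach_def by auto
  qed

  have "sub_sound PM TM FM Inp Out" if SS: "sub_sound P T F Inp Out"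
    unfolding sub_sound_def
  proof (intro conjI allI impI)
    show "pWF PM TM FM Inp Out" by (rule pWFM)
  next
    fix k k' :: nat and m' :: "'a marking"
    assume kk: "k' \<le> k"
      and r: "reach TM FM (smult k (bag Inp)) (\<lambda>p. m' p + smult k' (bag Out) p)"
    have "m' ps + smult k' (bag Out) ps = smult k (bag Inp) ps" using reachM_ps[OF r] by simp
    then have m0: "m' ps = 0" using notIO by (simp add: smult_def bag_def)
    have "reach T F m' (smult (k - k') (bag Out))"
      using SS kk reachMN[OF r] unfolding sub_sound_def by blast
    from reachNM[OF this]
    have "reach TM FM (\<alpha> m') (\<alpha> (smult (k - k') (bag Out)))" .
    moreover have "\<alpha> m' = m'" unfolding \<alpha>_def using m0 by (auto intro!: ext)
    moreover have "\<alpha> (smult (k - k') (bag Out)) = smult (k - k') (bag Out)"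
      unfolding \<alpha>_def using notIO by (auto intro!: ext simp: smult_def bag_def)
    ultimately show "reach TM FM m' (smult (k - k') (bag Out))" by simp
  qed
  then show ?thesis using pWFM by blast
qed

end
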